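(* Let $L=E[C_1,\dots,C_n]$ be a congruence normal lattice (notation in the context). Then: (1) $L$ is join-extremal if and only if every $C_i$ is a lower pseudo-interval and, for every $i$, $C_i$ intersects the spine of $E[C_1,\dots,C_{i-1}]$. (2) $L$ is meet-extremal if and only if every $C_i$ is an upper pseudo-interval and, for every $i$, $C_i$ intersects the spine of $E[C_1,\dots,C_{i-1}]$. (3) $L$ is extremal if and only if every $C_i$ is an interval and, for every $i$, $C_i$ intersects the spine of $E[C_1,\dots,C_{i-1}]$.
   Context: All lattices are finite. A subset $C$ of a poset is convex if $x,y\in C$ implies $[x,y]\subseteq C$. For a convex subset $C$ of a lattice $L$, let $I_L(C)=\{y\in L\mid \exists x\in C,\ y\le x\}$. The doubling $L[C]$ is the subposet of $L\times\{0<1\}$ (product order) on the set $\big(I_L(C)\times\{0\}\big)\sqcup\big(((L\setminus I_L(C))\cup C)\times\{1\}\big)$; it is a lattice. $E[\,]$ denotes the one-element lattice and $E[C_1,\dots,C_{i+1}]:=E[C_1,\dots,C_i][C_{i+1}]$, where each $C_{i+1}$ is a nonempty convex subset of $E[C_1,\dots,C_i]$; a lattice of this form is congruence normal. A lower (resp. upper) pseudo-interval is a union of intervals sharing the same minimum (resp. maximum) element. The length $\ell(P)$ of a poset is the maximum number of elements of a chain minus one; the spine of $P$ is the set of elements lying on some chain of length $\ell(P)$. A lattice $L$ is join-extremal if $\ell(L)$ equals the number of join-irreducible elements (elements covering exactly one element), meet-extremal if $\ell(L)$ equals the number of meet-irreducible elements (elements covered by exactly one element), and extremal if both hold. *)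

theory Defs
  imports Main
begin

text \<open>The doubling L[C] is a subposet of
L \<times> {0<1}; the pair (x,b) is encoded as the list x @ [b] (False = 0, True = 1).\<close>

type_synonym pos = "bool list set \<times> (bool list \<Rightarrow> bool list \<Rightarrow> bool)"

definition convex :: "pos \<Rightarrow> bool list set \<Rightarrow> bool" where
  "convex L C \<longleftrightarrow> C \<subseteq> fst L \<and>
     (\<forall>x\<in>C. \<forall>y\<in>C. \<forall>z\<in>fst L. snd L x z \<and> snd L z y \<longrightarrow> z \<in> C)"

definition down_closure :: "pos \<Rightarrow> bool list set \<Rightarrow> bool list set" where
  "down_closure L C = {y \<in> fst L. \<exists>x\<in>C. snd L y x}"

definition dbl :: "pos \<Rightarrow> bool list set \<Rightarrow> pos" where
  "dbl L C =
    ({x @ [False] | x. x \<in> down_closure L C} \<union>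
     {x @ [True] | x. x \<in> (fst L - down_closure L C) \<union> C},
     (\<lambda>u v. snd L (butlast u) (butlast v) \<and> (last u \<longrightarrow> last v)))"

definition E0 :: pos where
  "E0 = ({[]}, (\<lambda>x y. x = y))"

definition E :: "bool list set list \<Rightarrow> pos" where
  "E Cs = foldl dbl E0 Cs"

definition interval :: "pos \<Rightarrow> bool list \<Rightarrow> bool list \<Rightarrow> bool list set" where
  "interval L a b = {z \<in> fst L. snd L a z \<and> snd L z b}"

definition is_interval :: "pos \<Rightarrow> bool list set \<Rightarrow> bool" where
  "is_interval L C \<longleftrightarrow> (\<exists>a\<in>fst L. \<exists>b\<in>fst L. snd L a b \<and> C = interval L a b)"

definition lower_pseudo_interval :: "pos \<Rightarrow> bool list set \<Rightarrow> bool" where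
  "lower_pseudo_interval L C \<longleftrightarrow>
     (\<exists>a\<in>fst L. \<exists>B. B \<noteq> {} \<and> B \<subseteq> fst L \<and> (\<forall>b\<in>B. snd L a b) \<and>
        C = (\<Union>b\<in>B. interval L a b))"

definition upper_pseudo_interval :: "pos \<Rightarrow> bool list set \<Rightarrow> bool" where
  "upper_pseudo_interval L C \<longleftrightarrow>
     (\<exists>b\<in>fst L. \<exists>A. A \<noteq> {} \<and> A \<subseteq> fst L \<and> (\<forall>a\<in>A. snd L a b) \<and>
        C = (\<Union>a\<in>A. interval L a b))"

definition is_chain :: "pos \<Rightarrow> bool list set \<Rightarrow> bool" where
  "is_chain L S \<longleftrightarrow> S \<subseteq> fst L \<and> (\<forall>x\<in>S. \<forall>y\<in>S. snd L x y \<or> snd L y x)"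

definition len :: "pos \<Rightarrow> nat" where
  "len L = Max {card S - 1 | S. is_chain L S \<and> finite S}"

definition spine :: "pos \<Rightarrow> bool list set" where
  "spine L = {x. \<exists>S. is_chain L S \<and> finite S \<and> card S = len L + 1 \<and> x \<in> S}"

text \<open>covers L x y: x covers y\<close>
definition covers :: "pos \<Rightarrow> bool list \<Rightarrow> bool list \<Rightarrow> bool" where
  "covers L x y \<longleftrightarrow> x \<in> fst L \<and> y \<in> fst L \<and> snd L y x \<and> y \<noteq> x \<and>
     (\<forall>z\<in>fst L. snd L y z \<and> snd L z x \<longrightarrow> z = y \<or> z = x)"

definition join_irreducibles :: "pos \<Rightarrow> bool list set" where
  "join_irreducibles L = {x \<in> fst L. card {y. covers L x y} = 1}"

definition meet_irreducibles :: "pos \<Rightarrow> bool list set" where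
  "meet_irreducibles L = {x \<in> fst L. card {y. covers L y x} = 1}"

definition join_extremal :: "pos \<Rightarrow> bool" where
  "join_extremal L \<longleftrightarrow> len L = card (join_irreducibles L)"

definition meet_extremal :: "pos \<Rightarrow> bool" where
  "meet_extremal L \<longleftrightarrow> len L = card (meet_irreducibles L)"

definition extremal :: "pos \<Rightarrow> bool" where
  "extremal L \<longleftrightarrow> join_extremal L \<and> meet_extremal L"

end

theory Submission
  imports Defs
begin


definition po :: "pos \<Rightarrow> bool" where
  "po L \<longleftrightarrow> finite (fst L) \<and> fst L \<noteq> {} \<and> (\<forall>x\<in>fst L. snd L x x) \<and>
     (\<forall>x\<in>fst L. \<forall>y\<in>fst L. snd L x y \<and> snd L y x \<longrightarrow> x = y) \<and>
     (\<forall>x\<in>fst L. \<forall>y\<in>fst L. \<forall>z\<in>fst L. snd L x y \<and> snd L y z \<longrightarrow> snd L x z)"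

definition minset :: "pos \<Rightarrow> bool list set \<Rightarrow> bool list set" where
  "minset L C = {x\<in>C. \<forall>y\<in>C. snd L y x \<longrightarrow> y = x}"
definition maxset :: "pos \<Rightarrow> bool list set \<Rightarrow> bool list set" where
  "maxset L C = {x\<in>C. \<forall>y\<in>C. snd L x y \<longrightarrow> y = x}"

lemma po_refl: "po L \<Longrightarrow> x \<in> fst L \<Longrightarrow> snd L x x" by (simp add: po_def)
lemma po_antisym:
  assumes "po L" "x \<in> fst L" "y \<in> fst L" "snd L x y" "snd L y x" shows "x = y"
proof -
  from assms(1) have "\<forall>x\<in>fst L. \<forall>y\<in>fst L. snd L x y \<and> snd L y x \<longrightarrow> x = y"
    unfolding po_def by (elim conjE)
  with assms(2-) show ?thesis by blast
qed
lemma po_trans: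
  assumes "po L" "x \<in> fst L" "y \<in> fst L" "z \<in> fst L" "snd L x y" "snd L y z" shows "snd L x z"
proof -
  from assms(1) have "\<forall>x\<in>fst L. \<forall>y\<in>fst L. \<forall>z\<in>fst L. snd L x y \<and> snd L y z \<longrightarrow> snd L x z"
    unfolding po_def by (elim conjE)
  with assms(2-) show ?thesis by blast
qed
lemma po_finite: "po L \<Longrightarrow> finite (fst L)" by (simp add: po_def)

lemma ex_min_below:
  assumes "po L" "S \<subseteq> fst L" "c \<in> S"
  shows "\<exists>m\<in>S. snd L m c \<and> (\<forall>y\<in>S. snd L y m \<longrightarrow> y = m)"
proof -
  let ?P = "\<lambda>m. m \<in> S \<and> snd L m c"
  let ?M = "\<lambda>m. card {w\<in>fst L. snd L w m}"
  have "?P c" using assms po_refl by blast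
  then obtain m where m: "?P m" "\<forall>y. ?P y \<longrightarrow> ?M m \<le> ?M y"
    using ex_has_least_nat[of ?P c ?M] by blast
  have "\<forall>y\<in>S. snd L y m \<longrightarrow> y = m"
  proof (intro ballI impI, rule ccontr)
    fix y assume y: "y \<in> S" "snd L y m" "y \<noteq> m"
    have "?P y" using y m assms po_trans[OF assms(1), of y m c] by blast
    hence le: "?M m \<le> ?M y" using m by blast
    have sub: "{w\<in>fst L. snd L w y} \<subset> {w\<in>fst L. snd L w m}"
    proof
      show "{w\<in>fst L. snd L w y} \<subseteq> {w\<in>fst L. snd L w m}"
        using y m assms po_trans[OF assms(1)] by blast
      have "m \<notin> {w\<in>fst L. snd L w y}" using y m assms po_antisym[OF assms(1), of y m] by blast
      moreover have "m \<in> {w\<in>fst L. snd L w m}" using m assms po_refl by blast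
      ultimately show "{w\<in>fst L. snd L w y} \<noteq> {w\<in>fst L. snd L w m}" by blast
    qed
    have "?M y < ?M m" using psubset_card_mono[OF _ sub] po_finite[OF assms(1)] by simp
    with le show False by simp
  qed
  thus ?thesis using m by blast
qed

lemma ex_max_above:
  assumes "po L" "S \<subseteq> fst L" "c \<in> S"
  shows "\<exists>m\<in>S. snd L c m \<and> (\<forall>y\<in>S. snd L m y \<longrightarrow> y = m)"
proof -
  let ?P = "\<lambda>m. m \<in> S \<and> snd L c m"
  let ?M = "\<lambda>m. card {w\<in>fst L. snd L m w}"
  have "?P c" using assms po_refl by blast
  then obtain m where m: "?P m" "\<forall>y. ?P y \<longrightarrow> ?M m \<le> ?M y"
    using ex_has_least_nat[of ?P c ?M] by blast
  have "\<forall>y\<in>S. snd L m y \<longrightarrow> y = m"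
  proof (intro ballI impI, rule ccontr)
    fix y assume y: "y \<in> S" "snd L m y" "y \<noteq> m"
    have "?P y" using y m assms po_trans[OF assms(1), of c m y] by blast
    hence le: "?M m \<le> ?M y" using m by blast
    have sub: "{w\<in>fst L. snd L y w} \<subset> {w\<in>fst L. snd L m w}"
    proof
      show "{w\<in>fst L. snd L y w} \<subseteq> {w\<in>fst L. snd L m w}"
        using y m assms po_trans[OF assms(1)] by blast
      have "m \<notin> {w\<in>fst L. snd L y w}" using y m assms po_antisym[OF assms(1), of y m] by blast
      moreover have "m \<in> {w\<in>fst L. snd L m w}" using m assms po_refl by blast
      ultimately show "{w\<in>fst L. snd L y w} \<noteq> {w\<in>fst L. snd L m w}" by blast
    qed
    have "?M y < ?M m" using psubset_card_mono[OF _ sub] po_finite[OF assms(1)] by simp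
    with le show False by simp
  qed
  thus ?thesis using m by blast
qed

lemma ex_lower_cover:
  assumes "po L" "x \<in> fst L" "y \<in> fst L" "snd L y x" "y \<noteq> x"
  shows "\<exists>z. covers L x z \<and> snd L y z"
proof -
  let ?S = "{z\<in>fst L. snd L y z \<and> snd L z x \<and> z \<noteq> x}"
  have "y \<in> ?S" using assms po_refl[OF assms(1) assms(3)] by simp
  then obtain z where z: "z \<in> ?S" "\<forall>w\<in>?S. snd L z w \<longrightarrow> w = z"
    using ex_max_above[OF assms(1), of ?S y] by blast
  have zL: "z \<in> fst L" "snd L y z" "snd L z x" "z \<noteq> x" using z(1) by auto
  have B: "\<forall>w\<in>fst L. snd L z w \<and> snd L w x \<longrightarrow> w = z \<or> w = x"
  proof (intro ballI impI)
    fix w assume w: "w \<in> fst L" "snd L z w \<and> snd L w x"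
    show "w = z \<or> w = x"
    proof (cases "w = x")
      case False
      have "snd L y w" using po_trans[OF assms(1) assms(3) zL(1) w(1) zL(2)] w(2) by blast
      hence "w \<in> ?S" using w False by simp
      thus ?thesis using z(2) w(2) by blast
    qed simp
  qed
  have "covers L x z" unfolding covers_def using assms(2) zL B by blast
  thus ?thesis using zL by blast
qed

lemma ex_upper_cover:
  assumes "po L" "x \<in> fst L" "y \<in> fst L" "snd L x y" "y \<noteq> x"
  shows "\<exists>z. covers L z x \<and> snd L z y"
proof -
  let ?S = "{z\<in>fst L. snd L z y \<and> snd L x z \<and> z \<noteq> x}"
  have "y \<in> ?S" using assms po_refl[OF assms(1) assms(3)] by simp
  then obtain z where z: "z \<in> ?S" "\<forall>w\<in>?S. snd L w z \<longrightarrow> w = z"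
    using ex_min_below[OF assms(1), of ?S y] by blast
  have zL: "z \<in> fst L" "snd L z y" "snd L x z" "z \<noteq> x" using z(1) by auto
  have B: "\<forall>w\<in>fst L. snd L x w \<and> snd L w z \<longrightarrow> w = x \<or> w = z"
  proof (intro ballI impI)
    fix w assume w: "w \<in> fst L" "snd L x w \<and> snd L w z"
    show "w = x \<or> w = z"
    proof (cases "w = x")
      case False
      have "snd L w y" using po_trans[OF assms(1) w(1) zL(1) assms(3) _ zL(2)] w(2) by blast
      hence "w \<in> ?S" using w False by simp
      thus ?thesis using z(2) w(2) by blast
    qed simp
  qed
  have "covers L z x" unfolding covers_def using assms(2) zL B by blast
  thus ?thesis using zL by blast
qed




lemma chain_fin: "po L \<Longrightarrow> is_chain L S \<Longrightarrow> finite S"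
  unfolding is_chain_def using po_finite finite_subset by blast

lemma chain_card: "po L \<Longrightarrow> is_chain L S \<Longrightarrow> card S \<le> card (fst L)"
  unfolding is_chain_def using po_finite card_mono by blast

lemma len_set_fin: assumes "po L" shows "finite {card S - 1 | S. is_chain L S \<and> finite S}"
proof -
  have "{card S - 1 | S. is_chain L S \<and> finite S} \<subseteq> {0..card (fst L)}"
  proof
    fix y assume "y \<in> {card S - 1 | S. is_chain L S \<and> finite S}"
    then obtain S where "is_chain L S" "y = card S - 1" by blast
    thus "y \<in> {0..card (fst L)}" using chain_card[OF assms, of S] by simp
  qed
  thus ?thesis using finite_subset by blast
qed

lemma empty_chain: "is_chain L {}" unfolding is_chain_def by blast

lemma len_ge: assumes "po L" "is_chain L S" shows "card S \<le> len L + 1"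
proof -
  have "card S - 1 \<in> {card S - 1 | S. is_chain L S \<and> finite S}"
    using assms chain_fin by blast
  hence "card S - 1 \<le> len L" unfolding len_def using Max_ge[OF len_set_fin[OF assms(1)]] by blast
  thus ?thesis by simp
qed

lemma len_ex: assumes "po L" shows "\<exists>S. is_chain L S \<and> card S = len L + 1"
proof -
  have ne: "{card S - 1 | S. is_chain L S \<and> finite S} \<noteq> {}" using empty_chain[of L] finite.emptyI by blast
  have "len L \<in> {card S - 1 | S. is_chain L S \<and> finite S}"
    unfolding len_def using Max_in[OF len_set_fin[OF assms] ne] .
  hence "\<exists>S. len L = card S - 1 \<and> is_chain L S \<and> finite S" by (simp only: mem_Collect_eq)
  then obtain S where S0: "len L = card S - 1 \<and> is_chain L S \<and> finite S" by (rule exE)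
  hence S: "is_chain L S" "finite S" "card S - 1 = len L" by simp_all
  show ?thesis
  proof (cases "card S = 0")
    case False
    hence "card S = len L + 1" using S(3) by linarith
    thus ?thesis using S(1) by blast
  next
    case True
    hence l0: "len L = 0" using S(3) by linarith
    have "fst L \<noteq> {}" using assms unfolding po_def by (elim conjE)
    then obtain a where a: "a \<in> fst L" by blast
    have "is_chain L {a}" unfolding is_chain_def using a po_refl[OF assms a] by blast
    moreover have "card {a} = len L + 1" using l0 by simp
    ultimately show ?thesis by blast
  qed
qed

lemma len_eqI: assumes "po L" "\<And>S. is_chain L S \<Longrightarrow> card S \<le> k + 1" "is_chain L S0" "card S0 = k + 1"
  shows "len L = k"
  unfolding len_def
proof (rule Max_eqI[OF len_set_fin[OF assms(1)]])
  fix y assume "y \<in> {card S - 1 | S. is_chain L S \<and> finite S}"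
  then obtain S where "is_chain L S" "y = card S - 1" by blast
  thus "y \<le> k" using assms(2)[of S] by simp
next
  have "k = card S0 - 1" "finite S0" using assms(4) chain_fin[OF assms(1) assms(3)] by simp_all
  thus "k \<in> {card S - 1 | S. is_chain L S \<and> finite S}"
    using assms(3) by blast
qed

lemma spine_iff: "po L \<Longrightarrow> x \<in> spine L \<longleftrightarrow> (\<exists>S. is_chain L S \<and> card S = len L + 1 \<and> x \<in> S)"
  unfolding spine_def using chain_fin by blast

locale dctx =
  fixes L :: pos and C :: "bool list set"
  assumes po: "po L" and cv: "convex L C" and ne: "C \<noteq> {}"
begin

definition "I = down_closure L C"
definition "D = (fst L - I) \<union> C"

lemma C_sub: "C \<subseteq> fst L" by (rule conjunct1[OF cv[unfolded convex_def]])
lemma I_sub: "I \<subseteq> fst L" by (auto simp: I_def down_closure_def)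
lemma C_I: "C \<subseteq> I"
  unfolding I_def down_closure_def using C_sub po_refl[OF po] by blast
lemma D_sub: "D \<subseteq> fst L" using C_sub by (auto simp: D_def)
lemma I_D: "I \<union> D = fst L" using I_sub C_sub by (auto simp: D_def)

lemma I_down: assumes "x \<in> I" "y \<in> fst L" "snd L y x" shows "y \<in> I"
proof -
  obtain c where c: "c \<in> C" "snd L x c" "x \<in> fst L" using assms(1) by (auto simp: I_def down_closure_def)
  have cL: "c \<in> fst L" using c(1) C_sub by blast
  have "snd L y c" using po_trans[OF po assms(2) c(3) cL assms(3) c(2)] .
  thus ?thesis using c assms(2) unfolding I_def down_closure_def by blast
qed

lemma up_C: assumes "x \<in> C" "y \<in> I" "snd L x y" shows "y \<in> C"
proof -
  obtain c where c: "c \<in> C" "snd L y c" "y \<in> fst L" using assms(2) by (auto simp: I_def down_closure_def)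
  have "\<forall>x\<in>C. \<forall>y\<in>C. \<forall>z\<in>fst L. snd L x z \<and> snd L z y \<longrightarrow> z \<in> C" by (rule conjunct2[OF cv[unfolded convex_def]])
  hence "\<forall>z\<in>fst L. snd L x z \<and> snd L z c \<longrightarrow> z \<in> C" using assms(1) c(1) by blast
  thus ?thesis using c assms(3) by blast
qed

lemma D_up: assumes "x \<in> D" "y \<in> fst L" "snd L x y" shows "y \<in> D"
proof (cases "y \<in> I")
  case True
  have xL: "x \<in> fst L" using assms(1) D_sub by blast
  have "x \<in> I" using I_down[OF True xL assms(3)] .
  hence "x \<in> C" using assms(1) unfolding D_def by blast
  hence "y \<in> C" using up_C True assms(3) by blast
  thus ?thesis unfolding D_def by blast
next
  case False
  thus ?thesis using assms(2) unfolding D_def by blast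
qed

lemma ID: "x \<in> I \<Longrightarrow> x \<in> D \<Longrightarrow> x \<in> C" by (auto simp: D_def)

lemma fst_dbl: "fst (dbl L C) = (\<lambda>x. x @ [False]) ` I \<union> (\<lambda>x. x @ [True]) ` D"
  by (auto simp: dbl_def I_def D_def)

lemma mem_F[simp]: "x @ [False] \<in> fst (dbl L C) \<longleftrightarrow> x \<in> I"
  by (auto simp: fst_dbl)
lemma mem_T[simp]: "x @ [True] \<in> fst (dbl L C) \<longleftrightarrow> x \<in> D"
  by (auto simp: fst_dbl)
lemma snd_dbl[simp]: "snd (dbl L C) (x @ [b]) (y @ [c]) \<longleftrightarrow> snd L x y \<and> (b \<longrightarrow> c)"
  by (simp add: dbl_def)

lemma mem_cases:
  assumes "u \<in> fst (dbl L C)"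
  obtains x where "x \<in> I" "u = x @ [False]" | x where "x \<in> D" "u = x @ [True]"
  using assms unfolding fst_dbl by blast

lemma ball_dbl: "(\<forall>u\<in>fst (dbl L C). P u) \<longleftrightarrow> (\<forall>x\<in>I. P (x @ [False])) \<and> (\<forall>x\<in>D. P (x @ [True]))"
  unfolding fst_dbl by blast

lemma finite_dbl: "finite (fst (dbl L C))"
proof -
  have "finite I" "finite D" using I_sub D_sub po_finite[OF po] finite_subset by blast+
  thus ?thesis unfolding fst_dbl by simp
qed

lemma po_dbl: "po (dbl L C)"
proof -
  obtain c where c: "c \<in> C" using ne by blast
  have ne': "fst (dbl L C) \<noteq> {}" using c C_I mem_F by blast
  have R: "\<forall>u\<in>fst (dbl L C). snd (dbl L C) u u"
    unfolding ball_dbl using I_sub D_sub po_refl[OF po] by auto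
  have AS: "\<forall>u\<in>fst (dbl L C). \<forall>v\<in>fst (dbl L C). snd (dbl L C) u v \<and> snd (dbl L C) v u \<longrightarrow> u = v"
  proof -
    have a: "\<And>x y. x \<in> fst L \<Longrightarrow> y \<in> fst L \<Longrightarrow> snd L x y \<Longrightarrow> snd L y x \<Longrightarrow> x = y"
      using po_antisym[OF po] by blast
    show ?thesis unfolding ball_dbl using I_sub D_sub
      by (simp; meson a subsetD)
  qed
  have T: "\<forall>u\<in>fst (dbl L C). \<forall>v\<in>fst (dbl L C). \<forall>w\<in>fst (dbl L C).
      snd (dbl L C) u v \<and> snd (dbl L C) v w \<longrightarrow> snd (dbl L C) u w"
  proof -
    have t: "\<And>x y z. x \<in> fst L \<Longrightarrow> y \<in> fst L \<Longrightarrow> z \<in> fst L \<Longrightarrow> snd L x y \<Longrightarrow> snd L y z \<Longrightarrow> snd L x z"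
      using po_trans[OF po] by blast
    show ?thesis unfolding ball_dbl using I_sub D_sub
      by (simp; blast intro: t)
  qed
  show ?thesis unfolding po_def using finite_dbl ne' R AS T by blast
qed


lemma covers_dbl:
  "covers (dbl L C) (x @ [b]) (y @ [c]) \<longleftrightarrow>
     x @ [b] \<in> fst (dbl L C) \<and> y @ [c] \<in> fst (dbl L C) \<and> snd L y x \<and> (c \<longrightarrow> b) \<and>
     (y \<noteq> x \<or> b \<noteq> c) \<and>
     (\<forall>w\<in>I. snd L y w \<and> \<not> c \<and> snd L w x \<longrightarrow> w = y \<or> (w = x \<and> \<not> b)) \<and>
     (\<forall>w\<in>D. snd L y w \<and> snd L w x \<and> b \<longrightarrow> (w = y \<and> c) \<or> w = x)"
  unfolding covers_def ball_dbl by auto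

lemma xL: "x \<in> I \<Longrightarrow> x \<in> fst L" "x \<in> D \<Longrightarrow> x \<in> fst L" "x \<in> C \<Longrightarrow> x \<in> fst L"
  using I_sub D_sub C_sub by blast+


abbreviation "L2 \<equiv> dbl L C"

lemma covD: "covers L x y \<Longrightarrow> x \<in> fst L \<and> y \<in> fst L \<and> snd L y x \<and> y \<noteq> x \<and>
     (\<forall>z\<in>fst L. snd L y z \<and> snd L z x \<longrightarrow> z = y \<or> z = x)"
  unfolding covers_def by blast

lemma J1a: assumes "x \<in> I" shows "covers L2 (x @ [False]) (y @ [False]) \<longleftrightarrow> covers L x y"
proof
  assume "covers L2 (x @ [False]) (y @ [False])"
  hence h: "y \<in> I" "snd L y x" "y \<noteq> x" "\<forall>w\<in>I. snd L y w \<and> snd L w x \<longrightarrow> w = y \<or> w = x"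
    unfolding covers_dbl by auto
  have "\<forall>w\<in>fst L. snd L y w \<and> snd L w x \<longrightarrow> w = y \<or> w = x"
    using h(4) I_down[OF assms] by blast
  thus "covers L x y" unfolding covers_def using h xL assms by blast
next
  assume "covers L x y"
  hence h: "y \<in> fst L" "snd L y x" "y \<noteq> x" "\<forall>w\<in>fst L. snd L y w \<and> snd L w x \<longrightarrow> w = y \<or> w = x"
    using covD by blast+
  have "y \<in> I" using I_down[OF assms h(1) h(2)] .
  thus "covers L2 (x @ [False]) (y @ [False])" unfolding covers_dbl using h assms xL by auto
qed

lemma J1b: "\<not> covers L2 (x @ [False]) (y @ [True])"
  unfolding covers_dbl by auto

lemma J2a: assumes "x \<in> fst L" "x \<notin> I"
  shows "covers L2 (x @ [True]) (y @ [False]) \<longleftrightarrow> covers L x y \<and> y \<in> I \<and> y \<notin> C"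
proof
  assume "covers L2 (x @ [True]) (y @ [False])"
  hence h: "y \<in> I" "snd L y x" "\<forall>w\<in>I. snd L y w \<and> snd L w x \<longrightarrow> w = y"
     "\<forall>w\<in>D. snd L y w \<and> snd L w x \<longrightarrow> w = x"
    unfolding covers_dbl by auto
  have yx: "y \<noteq> x" using h(1) assms(2) by blast
  have yC: "y \<notin> C"
  proof
    assume "y \<in> C"
    hence "y \<in> D" by (simp add: D_def)
    hence "y = x" using h(4) h(2) po_refl[OF po xL(1)[OF h(1)]] by blast
    thus False using yx by blast
  qed
  have "\<forall>w\<in>fst L. snd L y w \<and> snd L w x \<longrightarrow> w = y \<or> w = x"
    using h(3) h(4) I_D by blast
  thus "covers L x y \<and> y \<in> I \<and> y \<notin> C" unfolding covers_def using h yx yC xL assms by blast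
next
  assume "covers L x y \<and> y \<in> I \<and> y \<notin> C"
  hence h: "y \<in> fst L" "snd L y x" "y \<noteq> x" "\<forall>w\<in>fst L. snd L y w \<and> snd L w x \<longrightarrow> w = y \<or> w = x"
    "y \<in> I" "y \<notin> C"
    using covD by blast+
  have xD: "x \<in> D" using assms by (simp add: D_def)
  have A1: "\<forall>w\<in>I. snd L y w \<and> snd L w x \<longrightarrow> w = y"
    using h(4) xL assms(2) by blast
  have A2: "\<forall>w\<in>D. snd L y w \<and> snd L w x \<longrightarrow> w = x"
    using h(4) h(5) h(6) xL ID by blast
  show "covers L2 (x @ [True]) (y @ [False])" unfolding covers_dbl using h xD A1 A2 by auto
qed

lemma J2b: assumes "x \<in> fst L" "x \<notin> I"
  shows "covers L2 (x @ [True]) (y @ [True]) \<longleftrightarrow> covers L x y \<and> y \<in> D"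
proof
  assume "covers L2 (x @ [True]) (y @ [True])"
  hence h: "y \<in> D" "snd L y x" "y \<noteq> x" "\<forall>w\<in>D. snd L y w \<and> snd L w x \<longrightarrow> w = y \<or> w = x"
    unfolding covers_dbl by auto
  have "\<forall>w\<in>fst L. snd L y w \<and> snd L w x \<longrightarrow> w = y \<or> w = x"
    using h(4) D_up[OF h(1)] by blast
  thus "covers L x y \<and> y \<in> D" unfolding covers_def using h xL assms by blast
next
  assume "covers L x y \<and> y \<in> D"
  hence h: "y \<in> fst L" "snd L y x" "y \<noteq> x" "\<forall>w\<in>fst L. snd L y w \<and> snd L w x \<longrightarrow> w = y \<or> w = x"
    "y \<in> D"
    using covD by blast+
  have xD: "x \<in> D" using assms by (simp add: D_def)
  show "covers L2 (x @ [True]) (y @ [True])" unfolding covers_dbl using h xD xL by auto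
qed

lemma J3a: assumes "x \<in> C"
  shows "covers L2 (x @ [True]) (y @ [False]) \<longleftrightarrow> y = x"
proof
  assume "covers L2 (x @ [True]) (y @ [False])"
  hence h: "y \<in> I" "snd L y x" "\<forall>w\<in>I. snd L y w \<and> snd L w x \<longrightarrow> w = y"
    unfolding covers_dbl by auto
  have "x \<in> I" using assms C_I by blast
  thus "y = x" using h po_refl[OF po xL(3)[OF assms]] by blast
next
  assume e: "y = x"
  have xI: "x \<in> I" and xD: "x \<in> D" using assms C_I by (auto simp: D_def)
  have "\<forall>w\<in>I. snd L x w \<and> snd L w x \<longrightarrow> w = x"
    using po_antisym[OF po] xL assms by blast
  moreover have "\<forall>w\<in>D. snd L x w \<and> snd L w x \<longrightarrow> w = x"
    using po_antisym[OF po] xL assms by blast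
  ultimately show "covers L2 (x @ [True]) (y @ [False])" unfolding covers_dbl e
    using xI xD po_refl[OF po xL(3)[OF assms]] by auto
qed

lemma J3b: assumes "x \<in> C"
  shows "covers L2 (x @ [True]) (y @ [True]) \<longleftrightarrow> covers L x y \<and> y \<in> C"
proof
  assume "covers L2 (x @ [True]) (y @ [True])"
  hence h: "y \<in> D" "snd L y x" "y \<noteq> x" "\<forall>w\<in>D. snd L y w \<and> snd L w x \<longrightarrow> w = y \<or> w = x"
    unfolding covers_dbl by auto
  have "y \<in> I" using I_down[OF _ xL(2)[OF h(1)] h(2)] assms C_I by blast
  hence yC: "y \<in> C" using ID h(1) by blast
  have "\<forall>w\<in>fst L. snd L y w \<and> snd L w x \<longrightarrow> w = y \<or> w = x"
    using h(4) D_up[OF h(1)] by blast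
  thus "covers L x y \<and> y \<in> C" unfolding covers_def using h xL assms yC by blast
next
  assume "covers L x y \<and> y \<in> C"
  hence h: "y \<in> fst L" "snd L y x" "y \<noteq> x" "\<forall>w\<in>fst L. snd L y w \<and> snd L w x \<longrightarrow> w = y \<or> w = x"
    "y \<in> C"
    using covD by blast+
  have xD: "x \<in> D" "y \<in> D" using assms h(5) by (auto simp: D_def)
  show "covers L2 (x @ [True]) (y @ [True])" unfolding covers_dbl using h xD xL by auto
qed

lemma M1a: "\<not> covers L2 (y @ [False]) (x @ [True])"
  unfolding covers_dbl by auto

lemma M1b: assumes "x \<in> D"
  shows "covers L2 (y @ [True]) (x @ [True]) \<longleftrightarrow> covers L y x"
proof
  assume "covers L2 (y @ [True]) (x @ [True])"
  hence h: "y \<in> D" "snd L x y" "x \<noteq> y" "\<forall>w\<in>D. snd L x w \<and> snd L w y \<longrightarrow> w = x \<or> w = y"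
    unfolding covers_dbl by auto
  have "\<forall>w\<in>fst L. snd L x w \<and> snd L w y \<longrightarrow> w = x \<or> w = y"
    using h(4) D_up[OF assms] by blast
  thus "covers L y x" unfolding covers_def using h xL assms by blast
next
  assume "covers L y x"
  hence h: "y \<in> fst L" "snd L x y" "x \<noteq> y" "\<forall>w\<in>fst L. snd L x w \<and> snd L w y \<longrightarrow> w = x \<or> w = y"
    using covD by blast+
  have "y \<in> D" using D_up[OF assms h(1) h(2)] .
  thus "covers L2 (y @ [True]) (x @ [True])" unfolding covers_dbl using h assms xL by auto
qed

lemma M2a: assumes "x \<in> I" "x \<notin> C"
  shows "covers L2 (y @ [False]) (x @ [False]) \<longleftrightarrow> covers L y x \<and> y \<in> I"
proof
  assume "covers L2 (y @ [False]) (x @ [False])"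
  hence h: "y \<in> I" "snd L x y" "x \<noteq> y" "\<forall>w\<in>I. snd L x w \<and> snd L w y \<longrightarrow> w = x \<or> w = y"
    unfolding covers_dbl by auto
  have "\<forall>w\<in>fst L. snd L x w \<and> snd L w y \<longrightarrow> w = x \<or> w = y"
    using h(4) I_down[OF h(1)] by blast
  thus "covers L y x \<and> y \<in> I" unfolding covers_def using h xL assms by blast
next
  assume "covers L y x \<and> y \<in> I"
  hence h: "y \<in> fst L" "snd L x y" "x \<noteq> y" "\<forall>w\<in>fst L. snd L x w \<and> snd L w y \<longrightarrow> w = x \<or> w = y"
    "y \<in> I"
    using covD by blast+
  show "covers L2 (y @ [False]) (x @ [False])" unfolding covers_dbl using h assms xL by auto
qed

lemma M2b: assumes "x \<in> I" "x \<notin> C"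
  shows "covers L2 (y @ [True]) (x @ [False]) \<longleftrightarrow> covers L y x \<and> y \<notin> I"
proof
  assume "covers L2 (y @ [True]) (x @ [False])"
  hence h: "y \<in> D" "snd L x y" "\<forall>w\<in>I. snd L x w \<and> snd L w y \<longrightarrow> w = x"
     "\<forall>w\<in>D. snd L x w \<and> snd L w y \<longrightarrow> w = y"
    unfolding covers_dbl by auto
  have yI: "y \<notin> I"
  proof
    assume "y \<in> I"
    hence "y = x" using h(3) h(2) po_refl[OF po xL(1)[OF \<open>y \<in> I\<close>]] by blast
    hence "x \<in> C" using ID h(1) assms(1) by blast
    thus False using assms(2) by blast
  qed
  have xy: "x \<noteq> y" using yI assms(1) by blast
  have "\<forall>w\<in>fst L. snd L x w \<and> snd L w y \<longrightarrow> w = x \<or> w = y"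
    using h(3) h(4) I_D by blast
  thus "covers L y x \<and> y \<notin> I" unfolding covers_def using h xy yI xL assms by blast
next
  assume "covers L y x \<and> y \<notin> I"
  hence h: "y \<in> fst L" "snd L x y" "x \<noteq> y" "\<forall>w\<in>fst L. snd L x w \<and> snd L w y \<longrightarrow> w = x \<or> w = y"
    "y \<notin> I"
    using covD by blast+
  have yD: "y \<in> D" using h by (simp add: D_def)
  have A1: "\<forall>w\<in>I. snd L x w \<and> snd L w y \<longrightarrow> w = x"
    using h(4) h(5) xL by blast
  have A2: "\<forall>w\<in>D. snd L x w \<and> snd L w y \<longrightarrow> w = y"
    using h(4) assms xL ID by blast
  show "covers L2 (y @ [True]) (x @ [False])" unfolding covers_dbl using h yD assms A1 A2 by auto
qed

lemma M3a: assumes "x \<in> C"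
  shows "covers L2 (y @ [True]) (x @ [False]) \<longleftrightarrow> y = x"
proof
  assume "covers L2 (y @ [True]) (x @ [False])"
  hence h: "y \<in> D" "snd L x y" "\<forall>w\<in>D. snd L x w \<and> snd L w y \<longrightarrow> w = y"
    unfolding covers_dbl by auto
  have "x \<in> D" using assms by (simp add: D_def)
  thus "y = x" using h po_refl[OF po xL(3)[OF assms]] by blast
next
  assume e: "y = x"
  have xI: "x \<in> I" and xD: "x \<in> D" using assms C_I by (auto simp: D_def)
  have "\<forall>w\<in>I. snd L x w \<and> snd L w x \<longrightarrow> w = x"
    using po_antisym[OF po] xL assms by blast
  moreover have "\<forall>w\<in>D. snd L x w \<and> snd L w x \<longrightarrow> w = x"
    using po_antisym[OF po] xL assms by blast
  ultimately show "covers L2 (y @ [True]) (x @ [False])" unfolding covers_dbl e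
    using xI xD po_refl[OF po xL(3)[OF assms]] by auto
qed

lemma M3b: assumes "x \<in> C"
  shows "covers L2 (y @ [False]) (x @ [False]) \<longleftrightarrow> covers L y x \<and> y \<in> C"
proof
  assume "covers L2 (y @ [False]) (x @ [False])"
  hence h: "y \<in> I" "snd L x y" "x \<noteq> y" "\<forall>w\<in>I. snd L x w \<and> snd L w y \<longrightarrow> w = x \<or> w = y"
    unfolding covers_dbl by auto
  have yC: "y \<in> C" using up_C[OF assms h(1) h(2)] .
  have "\<forall>w\<in>fst L. snd L x w \<and> snd L w y \<longrightarrow> w = x \<or> w = y"
    using h(4) I_down[OF h(1)] by blast
  thus "covers L y x \<and> y \<in> C" unfolding covers_def using h xL assms yC by blast
next
  assume "covers L y x \<and> y \<in> C"
  hence h: "y \<in> fst L" "snd L x y" "x \<noteq> y" "\<forall>w\<in>fst L. snd L x w \<and> snd L w y \<longrightarrow> w = x \<or> w = y"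
    "y \<in> C"
    using covD by blast+
  have "x \<in> I" "y \<in> I" using assms h(5) C_I by auto
  thus "covers L2 (y @ [False]) (x @ [False])" unfolding covers_dbl using h xL by auto
qed


lemma card_FT: assumes "finite P" "finite Q"
  shows "card ((\<lambda>z. z @ [False]) ` P \<union> (\<lambda>z. z @ [True]) ` Q) = card P + card Q"
proof -
  have d: "(\<lambda>z. z @ [False]) ` P \<inter> (\<lambda>z. z @ [True]) ` Q = {}" by auto
  have "card ((\<lambda>z. z @ [False]) ` P \<union> (\<lambda>z. z @ [True]) ` Q)
     = card ((\<lambda>z. z @ [False]) ` P) + card ((\<lambda>z. z @ [True]) ` Q)"
    using card_Un_disjoint[OF _ _ d] assms by simp
  moreover have "card ((\<lambda>z. z @ [False]) ` P) = card P" by (rule card_image) (simp add: inj_on_def)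
  moreover have "card ((\<lambda>z. z @ [True]) ` Q) = card Q" by (rule card_image) (simp add: inj_on_def)
  ultimately show ?thesis by simp
qed

lemma card_F: "card ((\<lambda>z. z @ [b]) ` P) = card P"
  by (rule card_image) (simp add: inj_on_def)

lemma covers_in2: "covers L2 u v \<Longrightarrow> v \<in> fst L2 \<and> u \<in> fst L2" unfolding covers_def by blast

lemma fin_cov: "finite {z. covers L x z}" "finite {z. covers L z x}"
  using po_finite[OF po] by (auto intro: finite_subset simp: covers_def)

lemma S1: assumes "x \<in> I"
  shows "card {v. covers L2 (x @ [False]) v} = card {z. covers L x z}"
proof -
  have "{v. covers L2 (x @ [False]) v} = (\<lambda>z. z @ [False]) ` {z. covers L x z}"
  proof (rule set_eqI, rule iffI)
    fix v assume "v \<in> {v. covers L2 (x @ [False]) v}"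
    hence c: "covers L2 (x @ [False]) v" by simp
    hence "v \<in> fst L2" using covers_in2 by blast
    thus "v \<in> (\<lambda>z. z @ [False]) ` {z. covers L x z}"
    proof (cases rule: mem_cases)
      case (1 y) thus ?thesis using c J1a[OF assms] by auto
    next
      case (2 y) thus ?thesis using c J1b by auto
    qed
  next
    fix v assume "v \<in> (\<lambda>z. z @ [False]) ` {z. covers L x z}"
    thus "v \<in> {v. covers L2 (x @ [False]) v}" using J1a[OF assms] by auto
  qed
  thus ?thesis using card_F by simp
qed

lemma S2: assumes "x \<in> fst L" "x \<notin> I"
  shows "card {v. covers L2 (x @ [True]) v} = card {z. covers L x z}"
proof -
  let ?P = "{z. covers L x z \<and> z \<in> I \<and> z \<notin> C}" and ?Q = "{z. covers L x z \<and> z \<in> D}"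
  have "{v. covers L2 (x @ [True]) v} = (\<lambda>z. z @ [False]) ` ?P \<union> (\<lambda>z. z @ [True]) ` ?Q"
  proof (rule set_eqI, rule iffI)
    fix v assume "v \<in> {v. covers L2 (x @ [True]) v}"
    hence c: "covers L2 (x @ [True]) v" by simp
    hence "v \<in> fst L2" using covers_in2 by blast
    thus "v \<in> (\<lambda>z. z @ [False]) ` ?P \<union> (\<lambda>z. z @ [True]) ` ?Q"
    proof (cases rule: mem_cases)
      case (1 y) thus ?thesis using c J2a[OF assms] by auto
    next
      case (2 y) thus ?thesis using c J2b[OF assms] by auto
    qed
  next
    fix v assume "v \<in> (\<lambda>z. z @ [False]) ` ?P \<union> (\<lambda>z. z @ [True]) ` ?Q"
    thus "v \<in> {v. covers L2 (x @ [True]) v}" using J2a[OF assms] J2b[OF assms] by auto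
  qed
  moreover have "finite ?P" "finite ?Q" using fin_cov(1)[of x] by (auto intro: finite_subset)
  ultimately have "card {v. covers L2 (x @ [True]) v} = card ?P + card ?Q" using card_FT by simp
  also have "\<dots> = card (?P \<union> ?Q)"
    by (rule card_Un_disjoint[symmetric]) (use \<open>finite ?P\<close> \<open>finite ?Q\<close> in \<open>auto simp: D_def\<close>)
  also have "?P \<union> ?Q = {z. covers L x z}"
  proof -
    have "\<And>z. covers L x z \<Longrightarrow> z \<in> fst L" unfolding covers_def by blast
    thus ?thesis by (auto simp: D_def)
  qed
  finally show ?thesis .
qed

lemma S3: assumes "x \<in> C"
  shows "card {v. covers L2 (x @ [True]) v} = Suc (card {z. covers L x z \<and> z \<in> C})"
proof -
  let ?Q = "{z. covers L x z \<and> z \<in> C}"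
  have "{v. covers L2 (x @ [True]) v} = (\<lambda>z. z @ [False]) ` {x} \<union> (\<lambda>z. z @ [True]) ` ?Q"
  proof (rule set_eqI, rule iffI)
    fix v assume "v \<in> {v. covers L2 (x @ [True]) v}"
    hence c: "covers L2 (x @ [True]) v" by simp
    hence "v \<in> fst L2" using covers_in2 by blast
    thus "v \<in> (\<lambda>z. z @ [False]) ` {x} \<union> (\<lambda>z. z @ [True]) ` ?Q"
    proof (cases rule: mem_cases)
      case (1 y) thus ?thesis using c J3a[OF assms] by auto
    next
      case (2 y) thus ?thesis using c J3b[OF assms] by auto
    qed
  next
    fix v assume "v \<in> (\<lambda>z. z @ [False]) ` {x} \<union> (\<lambda>z. z @ [True]) ` ?Q"
    thus "v \<in> {v. covers L2 (x @ [True]) v}" using J3a[OF assms] J3b[OF assms] by auto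
  qed
  moreover have "finite ?Q" using fin_cov(1)[of x] by (auto intro: finite_subset)
  ultimately show ?thesis using card_FT[of "{x}" ?Q] by simp
qed

lemma T1: assumes "x \<in> D"
  shows "card {v. covers L2 v (x @ [True])} = card {z. covers L z x}"
proof -
  have "{v. covers L2 v (x @ [True])} = (\<lambda>z. z @ [True]) ` {z. covers L z x}"
  proof (rule set_eqI, rule iffI)
    fix v assume "v \<in> {v. covers L2 v (x @ [True])}"
    hence c: "covers L2 v (x @ [True])" by simp
    hence "v \<in> fst L2" using covers_in2 by blast
    thus "v \<in> (\<lambda>z. z @ [True]) ` {z. covers L z x}"
    proof (cases rule: mem_cases)
      case (1 y) thus ?thesis using c M1a by auto
    next
      case (2 y) thus ?thesis using c M1b[OF assms] by auto
    qed
  next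
    fix v assume "v \<in> (\<lambda>z. z @ [True]) ` {z. covers L z x}"
    thus "v \<in> {v. covers L2 v (x @ [True])}" using M1b[OF assms] by auto
  qed
  thus ?thesis using card_F by simp
qed

lemma T2: assumes "x \<in> I" "x \<notin> C"
  shows "card {v. covers L2 v (x @ [False])} = card {z. covers L z x}"
proof -
  let ?P = "{z. covers L z x \<and> z \<in> I}" and ?Q = "{z. covers L z x \<and> z \<notin> I}"
  have "{v. covers L2 v (x @ [False])} = (\<lambda>z. z @ [False]) ` ?P \<union> (\<lambda>z. z @ [True]) ` ?Q"
  proof (rule set_eqI, rule iffI)
    fix v assume "v \<in> {v. covers L2 v (x @ [False])}"
    hence c: "covers L2 v (x @ [False])" by simp
    hence "v \<in> fst L2" using covers_in2 by blast
    thus "v \<in> (\<lambda>z. z @ [False]) ` ?P \<union> (\<lambda>z. z @ [True]) ` ?Q"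
    proof (cases rule: mem_cases)
      case (1 y) thus ?thesis using c M2a[OF assms] by auto
    next
      case (2 y) thus ?thesis using c M2b[OF assms] by auto
    qed
  next
    fix v assume "v \<in> (\<lambda>z. z @ [False]) ` ?P \<union> (\<lambda>z. z @ [True]) ` ?Q"
    thus "v \<in> {v. covers L2 v (x @ [False])}" using M2a[OF assms] M2b[OF assms] by auto
  qed
  moreover have "finite ?P" "finite ?Q" using fin_cov(2)[of x] by (auto intro: finite_subset)
  ultimately have "card {v. covers L2 v (x @ [False])} = card ?P + card ?Q" using card_FT by simp
  also have "\<dots> = card (?P \<union> ?Q)"
    by (rule card_Un_disjoint[symmetric]) (use \<open>finite ?P\<close> \<open>finite ?Q\<close> in auto)
  also have "?P \<union> ?Q = {z. covers L z x}" by auto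
  finally show ?thesis .
qed

lemma T3: assumes "x \<in> C"
  shows "card {v. covers L2 v (x @ [False])} = Suc (card {z. covers L z x \<and> z \<in> C})"
proof -
  let ?Q = "{z. covers L z x \<and> z \<in> C}"
  have "{v. covers L2 v (x @ [False])} = (\<lambda>z. z @ [False]) ` ?Q \<union> (\<lambda>z. z @ [True]) ` {x}"
  proof (rule set_eqI, rule iffI)
    fix v assume "v \<in> {v. covers L2 v (x @ [False])}"
    hence c: "covers L2 v (x @ [False])" by simp
    hence "v \<in> fst L2" using covers_in2 by blast
    thus "v \<in> (\<lambda>z. z @ [False]) ` ?Q \<union> (\<lambda>z. z @ [True]) ` {x}"
    proof (cases rule: mem_cases)
      case (1 y) thus ?thesis using c M3b[OF assms] by auto
    next
      case (2 y) thus ?thesis using c M3a[OF assms] by auto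
    qed
  next
    fix v assume "v \<in> (\<lambda>z. z @ [False]) ` ?Q \<union> (\<lambda>z. z @ [True]) ` {x}"
    thus "v \<in> {v. covers L2 v (x @ [False])}" using M3a[OF assms] M3b[OF assms] by auto
  qed
  moreover have "finite ?Q" using fin_cov(2)[of x] by (auto intro: finite_subset)
  ultimately show ?thesis using card_FT[of ?Q "{x}"] by simp
qed


lemma cvx: "y \<in> C \<Longrightarrow> x \<in> C \<Longrightarrow> z \<in> fst L \<Longrightarrow> snd L y z \<Longrightarrow> snd L z x \<Longrightarrow> z \<in> C"
  using conjunct2[OF cv[unfolded convex_def]] by blast

lemma min_iff: assumes "x \<in> C"
  shows "{z. covers L x z \<and> z \<in> C} = {} \<longleftrightarrow> x \<in> minset L C"
proof
  assume e: "{z. covers L x z \<and> z \<in> C} = {}"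
  show "x \<in> minset L C" unfolding minset_def
  proof (simp add: assms, intro ballI impI, rule ccontr)
    fix y assume y: "y \<in> C" "snd L y x" "y \<noteq> x"
    obtain z where z: "covers L x z" "snd L y z"
      using ex_lower_cover[OF po xL(3)[OF assms] xL(3)[OF y(1)] y(2) y(3)] by blast
    have "z \<in> C" using cvx[OF y(1) assms _ z(2)] covD[OF z(1)] by blast
    thus False using e z(1) by blast
  qed
next
  assume m: "x \<in> minset L C"
  show "{z. covers L x z \<and> z \<in> C} = {}"
  proof (rule ccontr)
    assume "{z. covers L x z \<and> z \<in> C} \<noteq> {}"
    then obtain z where z: "covers L x z" "z \<in> C" by blast
    thus False using m covD[OF z(1)] unfolding minset_def by blast
  qed
qed

lemma max_iff: assumes "x \<in> C"
  shows "{z. covers L z x \<and> z \<in> C} = {} \<longleftrightarrow> x \<in> maxset L C"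
proof
  assume e: "{z. covers L z x \<and> z \<in> C} = {}"
  show "x \<in> maxset L C" unfolding maxset_def
  proof (simp add: assms, intro ballI impI, rule ccontr)
    fix y assume y: "y \<in> C" "snd L x y" "y \<noteq> x"
    obtain z where z: "covers L z x" "snd L z y"
      using ex_upper_cover[OF po xL(3)[OF assms] xL(3)[OF y(1)] y(2) y(3)] by blast
    have "z \<in> C" using cvx[OF assms y(1) _ _ z(2)] covD[OF z(1)] by blast
    thus False using e z(1) by blast
  qed
next
  assume m: "x \<in> maxset L C"
  show "{z. covers L z x \<and> z \<in> C} = {}"
  proof (rule ccontr)
    assume "{z. covers L z x \<and> z \<in> C} \<noteq> {}"
    then obtain z where z: "covers L z x" "z \<in> C" by blast
    thus False using m covD[OF z(1)] unfolding maxset_def by blast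
  qed
qed

lemma JF: "x \<in> I \<Longrightarrow> x @ [False] \<in> join_irreducibles L2 \<longleftrightarrow> x \<in> join_irreducibles L"
  unfolding join_irreducibles_def using S1 xL by auto

lemma JT: assumes "x \<in> D"
  shows "x @ [True] \<in> join_irreducibles L2 \<longleftrightarrow> (x \<in> C \<and> x \<in> minset L C) \<or> (x \<notin> I \<and> x \<in> join_irreducibles L)"
proof (cases "x \<in> C")
  case True
  have xI: "x \<in> I" using True C_I by blast
  have f: "finite {z. covers L x z \<and> z \<in> C}" using fin_cov(1)[of x] by (auto intro: finite_subset)
  have "x @ [True] \<in> join_irreducibles L2 \<longleftrightarrow> card {z. covers L x z \<and> z \<in> C} = 0"
    unfolding join_irreducibles_def using S3[OF True] assms by simp
  also have "\<dots> \<longleftrightarrow> x \<in> minset L C" using min_iff[OF True] f by simp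
  finally show ?thesis using True xI by blast
next
  case False
  hence xI: "x \<notin> I" using assms by (simp add: D_def)
  have "x @ [True] \<in> join_irreducibles L2 \<longleftrightarrow> x \<in> join_irreducibles L"
    unfolding join_irreducibles_def using S2[OF xL(2)[OF assms] xI] assms xL by simp
  thus ?thesis using False xI by blast
qed

lemma MT: "x \<in> D \<Longrightarrow> x @ [True] \<in> meet_irreducibles L2 \<longleftrightarrow> x \<in> meet_irreducibles L"
  unfolding meet_irreducibles_def using T1 xL by auto

lemma MF: assumes "x \<in> I"
  shows "x @ [False] \<in> meet_irreducibles L2 \<longleftrightarrow> (x \<in> C \<and> x \<in> maxset L C) \<or> (x \<notin> C \<and> x \<in> meet_irreducibles L)"
proof (cases "x \<in> C")
  case True
  have f: "finite {z. covers L z x \<and> z \<in> C}" using fin_cov(2)[of x] by (auto intro: finite_subset)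
  have "x @ [False] \<in> meet_irreducibles L2 \<longleftrightarrow> card {z. covers L z x \<and> z \<in> C} = 0"
    unfolding meet_irreducibles_def using T3[OF True] assms by simp
  also have "\<dots> \<longleftrightarrow> x \<in> maxset L C" using max_iff[OF True] f by simp
  finally show ?thesis using True by blast
next
  case False
  have "x @ [False] \<in> meet_irreducibles L2 \<longleftrightarrow> x \<in> meet_irreducibles L"
    unfolding meet_irreducibles_def using T2[OF assms False] assms xL by simp
  thus ?thesis using False by blast
qed

lemma JI_eq: "join_irreducibles L2 = (\<lambda>z. z @ [False]) ` (I \<inter> join_irreducibles L)
   \<union> (\<lambda>z. z @ [True]) ` (((fst L - I) \<inter> join_irreducibles L) \<union> minset L C)"
proof (rule set_eqI, rule iffI)
  fix u assume u: "u \<in> join_irreducibles L2"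
  hence "u \<in> fst L2" unfolding join_irreducibles_def by blast
  thus "u \<in> (\<lambda>z. z @ [False]) ` (I \<inter> join_irreducibles L)
   \<union> (\<lambda>z. z @ [True]) ` (((fst L - I) \<inter> join_irreducibles L) \<union> minset L C)"
  proof (cases rule: mem_cases)
    case (1 x) thus ?thesis using u JF by auto
  next
    case (2 x) thus ?thesis using u JT[OF 2(1)] xL by auto
  qed
next
  fix u assume "u \<in> (\<lambda>z. z @ [False]) ` (I \<inter> join_irreducibles L)
   \<union> (\<lambda>z. z @ [True]) ` (((fst L - I) \<inter> join_irreducibles L) \<union> minset L C)"
  then consider x where "x \<in> I \<inter> join_irreducibles L" "u = x @ [False]"
    | x where "x \<in> (fst L - I) \<inter> join_irreducibles L" "u = x @ [True]"
    | x where "x \<in> minset L C" "u = x @ [True]" by blast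
  thus "u \<in> join_irreducibles L2"
  proof cases
    case 1 thus ?thesis using JF by auto
  next
    case 2
    hence "x \<in> D" by (simp add: D_def)
    thus ?thesis using 2 JT by auto
  next
    case 3
    hence "x \<in> C" unfolding minset_def by blast
    hence "x \<in> D" by (simp add: D_def)
    thus ?thesis using 3 JT \<open>x \<in> C\<close> by auto
  qed
qed

lemma MI_eq: "meet_irreducibles L2 = (\<lambda>z. z @ [False]) ` (((I - C) \<inter> meet_irreducibles L) \<union> maxset L C)
   \<union> (\<lambda>z. z @ [True]) ` (D \<inter> meet_irreducibles L)"
proof (rule set_eqI, rule iffI)
  fix u assume u: "u \<in> meet_irreducibles L2"
  hence "u \<in> fst L2" unfolding meet_irreducibles_def by blast
  thus "u \<in> (\<lambda>z. z @ [False]) ` (((I - C) \<inter> meet_irreducibles L) \<union> maxset L C)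
   \<union> (\<lambda>z. z @ [True]) ` (D \<inter> meet_irreducibles L)"
  proof (cases rule: mem_cases)
    case (1 x) thus ?thesis using u MF[OF 1(1)] by auto
  next
    case (2 x) thus ?thesis using u MT by auto
  qed
next
  fix u assume "u \<in> (\<lambda>z. z @ [False]) ` (((I - C) \<inter> meet_irreducibles L) \<union> maxset L C)
   \<union> (\<lambda>z. z @ [True]) ` (D \<inter> meet_irreducibles L)"
  then consider x where "x \<in> (I - C) \<inter> meet_irreducibles L" "u = x @ [False]"
    | x where "x \<in> maxset L C" "u = x @ [False]"
    | x where "x \<in> D \<inter> meet_irreducibles L" "u = x @ [True]" by blast
  thus "u \<in> meet_irreducibles L2"
  proof cases
    case 1 thus ?thesis using MF by auto
  next
    case 2
    hence "x \<in> C" unfolding maxset_def by blast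
    hence "x \<in> I" using C_I by blast
    thus ?thesis using 2 MF \<open>x \<in> C\<close> by auto
  next
    case 3 thus ?thesis using MT by auto
  qed
qed

lemma fin_JI: "finite (join_irreducibles L)" "finite (meet_irreducibles L)"
  "finite (minset L C)" "finite (maxset L C)"
  using po_finite[OF po] C_sub
  by (auto simp: join_irreducibles_def meet_irreducibles_def minset_def maxset_def intro: finite_subset)

lemma card_JI: "card (join_irreducibles L2) = card (join_irreducibles L) + card (minset L C)"
proof -
  let ?J = "join_irreducibles L"
  have f: "finite (I \<inter> ?J)" "finite ((fst L - I) \<inter> ?J)" "finite (minset L C)"
    using fin_JI by auto
  have d1: "((fst L - I) \<inter> ?J) \<inter> minset L C = {}" using C_I unfolding minset_def by blast
  have "card (join_irreducibles L2) = card (I \<inter> ?J) + card (((fst L - I) \<inter> ?J) \<union> minset L C)"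
    unfolding JI_eq using card_FT f by simp
  also have "card (((fst L - I) \<inter> ?J) \<union> minset L C) = card ((fst L - I) \<inter> ?J) + card (minset L C)"
    using card_Un_disjoint[OF f(2) f(3) d1] .
  also have "card (I \<inter> ?J) + (card ((fst L - I) \<inter> ?J) + card (minset L C))
      = card ((I \<inter> ?J) \<union> ((fst L - I) \<inter> ?J)) + card (minset L C)"
  proof -
    have "(I \<inter> ?J) \<inter> ((fst L - I) \<inter> ?J) = {}" by blast
    thus ?thesis using card_Un_disjoint[OF f(1) f(2)] by simp
  qed
  also have "(I \<inter> ?J) \<union> ((fst L - I) \<inter> ?J) = ?J"
    using I_sub unfolding join_irreducibles_def by blast
  finally show ?thesis .
qed

lemma card_MI: "card (meet_irreducibles L2) = card (meet_irreducibles L) + card (maxset L C)"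
proof -
  let ?J = "meet_irreducibles L"
  have f: "finite ((I - C) \<inter> ?J)" "finite (D \<inter> ?J)" "finite (maxset L C)"
    using fin_JI by auto
  have d1: "((I - C) \<inter> ?J) \<inter> maxset L C = {}" unfolding maxset_def by blast
  have "card (meet_irreducibles L2) = card (((I - C) \<inter> ?J) \<union> maxset L C) + card (D \<inter> ?J)"
    unfolding MI_eq using card_FT f by simp
  also have "card (((I - C) \<inter> ?J) \<union> maxset L C) = card ((I - C) \<inter> ?J) + card (maxset L C)"
    using card_Un_disjoint[OF f(1) f(3) d1] .
  also have "card ((I - C) \<inter> ?J) + card (maxset L C) + card (D \<inter> ?J)
      = card (((I - C) \<inter> ?J) \<union> (D \<inter> ?J)) + card (maxset L C)"
  proof -
    have "((I - C) \<inter> ?J) \<inter> (D \<inter> ?J) = {}" by (auto simp: D_def)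
    thus ?thesis using card_Un_disjoint[OF f(1) f(2)] by simp
  qed
  also have "((I - C) \<inter> ?J) \<union> (D \<inter> ?J) = ?J"
    using I_sub C_I unfolding meet_irreducibles_def D_def by blast
  finally show ?thesis .
qed


lemma proj: assumes "is_chain L2 S'"
  shows "\<exists>T. is_chain L T \<and> card S' \<le> card T + 1 \<and> (card S' = card T + 1 \<longrightarrow> T \<inter> C \<noteq> {})"
proof -
  let ?SF = "{x. x @ [False] \<in> S'}" and ?ST = "{x. x @ [True] \<in> S'}"
  have sub: "S' \<subseteq> fst L2" using assms unfolding is_chain_def by blast
  have SF: "?SF \<subseteq> I" using sub by auto
  have ST: "?ST \<subseteq> D" using sub by auto
  have fF: "finite ?SF" and fT: "finite ?ST"
    using finite_subset[OF SF finite_subset[OF I_sub po_finite[OF po]]]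
      finite_subset[OF ST finite_subset[OF D_sub po_finite[OF po]]] by blast+
  have S'eq: "S' = (\<lambda>z. z @ [False]) ` ?SF \<union> (\<lambda>z. z @ [True]) ` ?ST"
  proof (rule set_eqI, rule iffI)
    fix u assume u: "u \<in> S'"
    hence "u \<in> fst L2" using sub by blast
    thus "u \<in> (\<lambda>z. z @ [False]) ` ?SF \<union> (\<lambda>z. z @ [True]) ` ?ST"
      by (cases rule: mem_cases) (use u in auto)
  qed auto
  have cS': "card S' = card ?SF + card ?ST" using S'eq card_FT[OF fF fT] by simp
  have comp: "\<And>u v. u \<in> S' \<Longrightarrow> v \<in> S' \<Longrightarrow> snd L2 u v \<or> snd L2 v u"
    using assms unfolding is_chain_def by blast
  let ?T = "?SF \<union> ?ST"
  have chT: "is_chain L ?T"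
    unfolding is_chain_def
  proof (intro conjI ballI)
    show "?T \<subseteq> fst L" using SF ST I_sub D_sub by blast
  next
    fix x y assume x: "x \<in> ?T" and y: "y \<in> ?T"
    obtain b where b: "x @ [b] \<in> S'" using x by blast
    obtain c where c: "y @ [c] \<in> S'" using y by blast
    show "snd L x y \<or> snd L y x" using comp[OF b c] by auto
  qed
  have le1: "card (?SF \<inter> ?ST) \<le> 1"
  proof -
    have "\<forall>a\<in>?SF \<inter> ?ST. \<forall>b\<in>?SF \<inter> ?ST. a = b"
    proof (intro ballI)
      fix a b assume a: "a \<in> ?SF \<inter> ?ST" and b: "b \<in> ?SF \<inter> ?ST"
      have "snd L2 (a @ [True]) (b @ [False]) \<or> snd L2 (b @ [False]) (a @ [True])"
        using comp a b by blast
      hence 1: "snd L b a" by auto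
      have "snd L2 (b @ [True]) (a @ [False]) \<or> snd L2 (a @ [False]) (b @ [True])"
        using comp a b by blast
      hence 2: "snd L a b" by auto
      show "a = b" using po_antisym[OF po _ _ 2 1] a b SF I_sub by blast
    qed
    thus ?thesis using card_le_Suc0_iff_eq[of "?SF \<inter> ?ST"] fF by simp
  qed
  have cu: "card ?T + card (?SF \<inter> ?ST) = card ?SF + card ?ST"
    using card_Un_Int[OF fF fT] by simp
  have "card S' \<le> card ?T + 1" using cS' cu le1 by linarith
  moreover have "card S' = card ?T + 1 \<longrightarrow> ?T \<inter> C \<noteq> {}"
  proof
    assume "card S' = card ?T + 1"
    hence "card (?SF \<inter> ?ST) \<noteq> 0" using cS' cu by linarith
    then obtain x where "x \<in> ?SF \<inter> ?ST" by (metis card.empty ex_in_conv)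
    hence "x \<in> C" using SF ST ID by blast
    thus "?T \<inter> C \<noteq> {}" using \<open>x \<in> ?SF \<inter> ?ST\<close> by blast
  qed
  ultimately show ?thesis using chT by blast
qed

lemma lift: assumes "is_chain L S" shows "is_chain L2 ((\<lambda>z. z @ [False]) ` (S \<inter> I) \<union> (\<lambda>z. z @ [True]) ` (S - I))"
  and "card ((\<lambda>z. z @ [False]) ` (S \<inter> I) \<union> (\<lambda>z. z @ [True]) ` (S - I)) = card S"
proof -
  have SL: "S \<subseteq> fst L" and comp: "\<forall>x\<in>S. \<forall>y\<in>S. snd L x y \<or> snd L y x" using assms unfolding is_chain_def by blast+
  have fS: "finite S" using chain_fin[OF po assms] .
  show "is_chain L2 ((\<lambda>z. z @ [False]) ` (S \<inter> I) \<union> (\<lambda>z. z @ [True]) ` (S - I))"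
    unfolding is_chain_def
  proof (intro conjI ballI)
    show "(\<lambda>z. z @ [False]) ` (S \<inter> I) \<union> (\<lambda>z. z @ [True]) ` (S - I) \<subseteq> fst L2"
      using SL by (auto simp: D_def)
  next
    fix u v assume u: "u \<in> (\<lambda>z. z @ [False]) ` (S \<inter> I) \<union> (\<lambda>z. z @ [True]) ` (S - I)"
      and v: "v \<in> (\<lambda>z. z @ [False]) ` (S \<inter> I) \<union> (\<lambda>z. z @ [True]) ` (S - I)"
    obtain x b where x: "u = x @ [b]" "x \<in> S" "b \<longleftrightarrow> x \<notin> I" using u by blast
    obtain y c where y: "v = y @ [c]" "y \<in> S" "c \<longleftrightarrow> y \<notin> I" using v by blast
    have xy: "snd L x y \<or> snd L y x" using comp x(2) y(2) by blast
    have k1: "snd L x y \<Longrightarrow> b \<longrightarrow> c" using I_down[of y x] x y SL by blast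
    have k2: "snd L y x \<Longrightarrow> c \<longrightarrow> b" using I_down[of x y] x y SL by blast
    show "snd L2 u v \<or> snd L2 v u" unfolding x(1) y(1) snd_dbl using xy k1 k2 by blast
  qed
  have "card ((\<lambda>z. z @ [False]) ` (S \<inter> I) \<union> (\<lambda>z. z @ [True]) ` (S - I)) = card (S \<inter> I) + card (S - I)"
    using card_FT fS by simp
  also have "\<dots> = card S" using card_Int_Diff[OF fS] by simp
  finally show "card ((\<lambda>z. z @ [False]) ` (S \<inter> I) \<union> (\<lambda>z. z @ [True]) ` (S - I)) = card S" .
qed

lemma lift2: assumes "is_chain L S" "x \<in> S" "x \<in> C"
  shows "\<exists>S'. is_chain L2 S' \<and> card S' = card S + 1"
proof -
  have SL: "S \<subseteq> fst L" and comp: "\<forall>x\<in>S. \<forall>y\<in>S. snd L x y \<or> snd L y x" using assms unfolding is_chain_def by blast+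
  have fS: "finite S" using chain_fin[OF po assms(1)] .
  let ?P = "{y\<in>S. snd L y x}" and ?Q = "{y\<in>S. snd L x y}"
  let ?S' = "(\<lambda>z. z @ [False]) ` ?P \<union> (\<lambda>z. z @ [True]) ` ?Q"
  have xI: "x \<in> I" and xD: "x \<in> D" using assms(3) C_I by (auto simp: D_def)
  have PI: "?P \<subseteq> I" using I_down[OF xI] SL by blast
  have QD: "?Q \<subseteq> D" using D_up[OF xD] SL by blast
  have ch: "is_chain L2 ?S'"
    unfolding is_chain_def
  proof (intro conjI ballI)
    show "?S' \<subseteq> fst L2" using PI QD by auto
  next
    fix u v assume u: "u \<in> ?S'" and v: "v \<in> ?S'"
    have tr: "\<And>y z. y \<in> ?P \<Longrightarrow> z \<in> ?Q \<Longrightarrow> snd L y z"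
    proof -
      fix y z assume "y \<in> ?P" "z \<in> ?Q"
      thus "snd L y z" using po_trans[OF po, of y x z] SL assms(2) by blast
    qed
    obtain y b where y: "u = y @ [b]" "y \<in> S" "(\<not> b \<and> snd L y x) \<or> (b \<and> snd L x y)" using u by blast
    obtain z c where z: "v = z @ [c]" "z \<in> S" "(\<not> c \<and> snd L z x) \<or> (c \<and> snd L x z)" using v by blast
    have yz: "snd L y z \<or> snd L z y" using comp y(2) z(2) by blast
    show "snd L2 u v \<or> snd L2 v u" unfolding y(1) z(1) snd_dbl
    proof (cases b; cases c)
      assume "b" "\<not> c" thus "snd L y z \<and> (b \<longrightarrow> c) \<or> snd L z y \<and> (c \<longrightarrow> b)" using tr y z by blast
    next
      assume "\<not> b" "c" thus "snd L y z \<and> (b \<longrightarrow> c) \<or> snd L z y \<and> (c \<longrightarrow> b)" using tr y z by blast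
    qed (use yz in auto)
  qed
  have fP: "finite ?P" "finite ?Q" using fS by auto
  have "card ?S' = card ?P + card ?Q" using card_FT[OF fP] .
  also have "\<dots> = card (?P \<union> ?Q) + card (?P \<inter> ?Q)" using card_Un_Int[OF fP] .
  also have "?P \<union> ?Q = S"
  proof
    show "S \<subseteq> ?P \<union> ?Q" using comp assms(2) by blast
  qed blast
  also have "?P \<inter> ?Q = {x}"
  proof
    show "?P \<inter> ?Q \<subseteq> {x}"
    proof
      fix y assume "y \<in> ?P \<inter> ?Q"
      thus "y \<in> {x}" using po_antisym[OF po, of y x] SL assms(2) by blast
    qed
    show "{x} \<subseteq> ?P \<inter> ?Q" using assms(2) po_refl[OF po, of x] SL by blast
  qed
  finally show ?thesis using ch by auto
qed

lemma len_dbl: "len L2 = len L + (if C \<inter> spine L \<noteq> {} then 1 else 0)"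
proof (cases "C \<inter> spine L = {}")
  case True
  obtain S0 where S0: "is_chain L S0" "card S0 = len L + 1" using len_ex[OF po] by blast
  show ?thesis
  proof -
    have "len L2 = len L"
    proof (rule len_eqI[OF po_dbl])
      fix S' assume S': "is_chain L2 S'"
      obtain T where T: "is_chain L T" "card S' \<le> card T + 1" "card S' = card T + 1 \<longrightarrow> T \<inter> C \<noteq> {}"
        using proj[OF S'] by blast
      have cT: "card T \<le> len L + 1" using len_ge[OF po T(1)] .
      show "card S' \<le> len L + 1"
      proof (rule ccontr)
        assume "\<not> card S' \<le> len L + 1"
        hence "card T = len L + 1" "card S' = card T + 1" using T(2) cT by linarith+
        then obtain x where "x \<in> T" "x \<in> C" using T(3) by blast
        hence "x \<in> spine L" using spine_iff[OF po] T(1) \<open>card T = len L + 1\<close> by blast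
        thus False using True \<open>x \<in> C\<close> by blast
      qed
    next
      show "is_chain L2 ((\<lambda>z. z @ [False]) ` (S0 \<inter> I) \<union> (\<lambda>z. z @ [True]) ` (S0 - I))" using lift(1)[OF S0(1)] .
      show "card ((\<lambda>z. z @ [False]) ` (S0 \<inter> I) \<union> (\<lambda>z. z @ [True]) ` (S0 - I)) = len L + 1"
        using lift(2)[OF S0(1)] S0(2) by simp
    qed
    thus ?thesis using True by simp
  qed
next
  case False
  then obtain x where x: "x \<in> C" "x \<in> spine L" by blast
  then obtain S where S: "is_chain L S" "card S = len L + 1" "x \<in> S" using spine_iff[OF po] by blast
  obtain S' where S': "is_chain L2 S'" "card S' = card S + 1" using lift2[OF S(1) S(3) x(1)] by blast
  have "len L2 = len L + 1"
  proof (rule len_eqI[OF po_dbl _ S'(1)])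
    fix S' assume S': "is_chain L2 S'"
    obtain T where T: "is_chain L T" "card S' \<le> card T + 1"
      using proj[OF S'] by blast
    show "card S' \<le> len L + 1 + 1" using len_ge[OF po T(1)] T(2) by linarith
  qed (use S S' in simp)
  thus ?thesis using False by simp
qed


lemma min_ex: "\<exists>a\<in>C. a \<in> minset L C"
proof -
  obtain c where c: "c \<in> C" using ne by blast
  obtain m where m: "m \<in> C" "\<forall>y\<in>C. snd L y m \<longrightarrow> y = m"
    using ex_min_below[OF po C_sub c] by blast
  thus ?thesis unfolding minset_def by blast
qed

lemma max_ex: "\<exists>a\<in>C. a \<in> maxset L C"
proof -
  obtain c where c: "c \<in> C" using ne by blast
  obtain m where m: "m \<in> C" "\<forall>y\<in>C. snd L m y \<longrightarrow> y = m"
    using ex_max_above[OF po C_sub c] by blast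
  thus ?thesis unfolding maxset_def by blast
qed

lemma card_min_ge: "1 \<le> card (minset L C)"
proof -
  obtain a where "a \<in> minset L C" using min_ex by blast
  thus ?thesis using fin_JI(3) card_0_eq[OF fin_JI(3)] by (cases "card (minset L C)") auto
qed

lemma card_max_ge: "1 \<le> card (maxset L C)"
proof -
  obtain a where "a \<in> maxset L C" using max_ex by blast
  thus ?thesis using fin_JI(4) card_0_eq[OF fin_JI(4)] by (cases "card (maxset L C)") auto
qed

lemma min_all: assumes "card (minset L C) = 1" shows "\<exists>a\<in>C. \<forall>c\<in>C. snd L a c"
proof -
  obtain a where a: "minset L C = {a}" using assms card_1_singletonE by blast
  have aC: "a \<in> C" using a unfolding minset_def by blast
  have "\<forall>c\<in>C. snd L a c"
  proof
    fix c assume c: "c \<in> C"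
    obtain m where m: "m \<in> C" "snd L m c" "\<forall>y\<in>C. snd L y m \<longrightarrow> y = m"
      using ex_min_below[OF po C_sub c] by blast
    have "m \<in> minset L C" unfolding minset_def using m by blast
    hence "m = a" using a by blast
    thus "snd L a c" using m by blast
  qed
  thus ?thesis using aC by blast
qed

lemma max_all: assumes "card (maxset L C) = 1" shows "\<exists>b\<in>C. \<forall>c\<in>C. snd L c b"
proof -
  obtain a where a: "maxset L C = {a}" using assms card_1_singletonE by blast
  have aC: "a \<in> C" using a unfolding maxset_def by blast
  have "\<forall>c\<in>C. snd L c a"
  proof
    fix c assume c: "c \<in> C"
    obtain m where m: "m \<in> C" "snd L c m" "\<forall>y\<in>C. snd L m y \<longrightarrow> y = m"
      using ex_max_above[OF po C_sub c] by blast
    have "m \<in> maxset L C" unfolding maxset_def using m by blast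
    hence "m = a" using a by blast
    thus "snd L c a" using m by blast
  qed
  thus ?thesis using aC by blast
qed

lemma least_card_min: assumes "a \<in> C" "\<forall>c\<in>C. snd L a c" shows "card (minset L C) = 1"
proof -
  have "minset L C = {a}"
  proof
    show "minset L C \<subseteq> {a}"
    proof
      fix x assume x: "x \<in> minset L C"
      hence "x \<in> C" "\<forall>y\<in>C. snd L y x \<longrightarrow> y = x" unfolding minset_def by blast+
      thus "x \<in> {a}" using assms by blast
    qed
    have "\<forall>y\<in>C. snd L y a \<longrightarrow> y = a"
    proof (intro ballI impI)
      fix y assume "y \<in> C" "snd L y a"
      thus "y = a" using po_antisym[OF po, of y a] assms C_sub by blast
    qed
    thus "{a} \<subseteq> minset L C" unfolding minset_def using assms(1) by blast
  qed
  thus ?thesis by simp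
qed

lemma greatest_card_max: assumes "b \<in> C" "\<forall>c\<in>C. snd L c b" shows "card (maxset L C) = 1"
proof -
  have "maxset L C = {b}"
  proof
    show "maxset L C \<subseteq> {b}"
    proof
      fix x assume x: "x \<in> maxset L C"
      hence "x \<in> C" "\<forall>y\<in>C. snd L x y \<longrightarrow> y = x" unfolding maxset_def by blast+
      thus "x \<in> {b}" using assms by blast
    qed
    have "\<forall>y\<in>C. snd L b y \<longrightarrow> y = b"
    proof (intro ballI impI)
      fix y assume "y \<in> C" "snd L b y"
      thus "y = b" using po_antisym[OF po, of y b] assms C_sub by blast
    qed
    thus "{b} \<subseteq> maxset L C" unfolding maxset_def using assms(1) by blast
  qed
  thus ?thesis by simp
qed

lemma lpi: "lower_pseudo_interval L C \<longleftrightarrow> card (minset L C) = 1"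
proof
  assume "lower_pseudo_interval L C"
  then obtain a B where a: "a \<in> fst L" "B \<noteq> {}" "B \<subseteq> fst L" "\<forall>b\<in>B. snd L a b"
    "C = (\<Union>b\<in>B. interval L a b)" unfolding lower_pseudo_interval_def by blast
  obtain b where b: "b \<in> B" using a(2) by blast
  have "a \<in> interval L a b" unfolding interval_def using a b po_refl[OF po a(1)] by blast
  hence aC: "a \<in> C" using a(5) b by blast
  have "\<forall>c\<in>C. snd L a c" using a(5) unfolding interval_def by blast
  thus "card (minset L C) = 1" using least_card_min aC by blast
next
  assume "card (minset L C) = 1"
  then obtain a where a: "a \<in> C" "\<forall>c\<in>C. snd L a c" using min_all by blast
  have "C = (\<Union>b\<in>C. interval L a b)"
  proof
    show "C \<subseteq> (\<Union>b\<in>C. interval L a b)"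
    proof
      fix c assume c: "c \<in> C"
      hence "c \<in> interval L a c" unfolding interval_def using a C_sub po_refl[OF po, of c] by blast
      thus "c \<in> (\<Union>b\<in>C. interval L a b)" using c by blast
    qed
    show "(\<Union>b\<in>C. interval L a b) \<subseteq> C"
    proof
      fix z assume "z \<in> (\<Union>b\<in>C. interval L a b)"
      then obtain b where "b \<in> C" "z \<in> fst L" "snd L a z" "snd L z b" unfolding interval_def by blast
      thus "z \<in> C" using cvx[OF a(1)] by blast
    qed
  qed
  thus "lower_pseudo_interval L C" unfolding lower_pseudo_interval_def
    using a C_sub ne by blast
qed

lemma upi: "upper_pseudo_interval L C \<longleftrightarrow> card (maxset L C) = 1"
proof
  assume "upper_pseudo_interval L C"
  then obtain b A where b: "b \<in> fst L" "A \<noteq> {}" "A \<subseteq> fst L" "\<forall>a\<in>A. snd L a b"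
    "C = (\<Union>a\<in>A. interval L a b)" unfolding upper_pseudo_interval_def by blast
  obtain a where a: "a \<in> A" using b(2) by blast
  have "b \<in> interval L a b" unfolding interval_def using a b po_refl[OF po b(1)] by blast
  hence bC: "b \<in> C" using b(5) a by blast
  have "\<forall>c\<in>C. snd L c b" using b(5) unfolding interval_def by blast
  thus "card (maxset L C) = 1" using greatest_card_max bC by blast
next
  assume "card (maxset L C) = 1"
  then obtain b where b: "b \<in> C" "\<forall>c\<in>C. snd L c b" using max_all by blast
  have "C = (\<Union>a\<in>C. interval L a b)"
  proof
    show "C \<subseteq> (\<Union>a\<in>C. interval L a b)"
    proof
      fix c assume c: "c \<in> C"
      hence "c \<in> interval L c b" unfolding interval_def using b C_sub po_refl[OF po, of c] by blast
      thus "c \<in> (\<Union>a\<in>C. interval L a b)" using c by blast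
    qed
    show "(\<Union>a\<in>C. interval L a b) \<subseteq> C"
    proof
      fix z assume "z \<in> (\<Union>a\<in>C. interval L a b)"
      then obtain a where "a \<in> C" "z \<in> fst L" "snd L a z" "snd L z b" unfolding interval_def by blast
      thus "z \<in> C" using cvx[OF _ b(1)] by blast
    qed
  qed
  thus "upper_pseudo_interval L C" unfolding upper_pseudo_interval_def
    using b C_sub ne by blast
qed

lemma ivl: "is_interval L C \<longleftrightarrow> card (minset L C) = 1 \<and> card (maxset L C) = 1"
proof
  assume "is_interval L C"
  then obtain a b where ab: "a \<in> fst L" "b \<in> fst L" "snd L a b" "C = interval L a b"
    unfolding is_interval_def by blast
  have aC: "a \<in> C" "b \<in> C" unfolding ab(4) interval_def using ab po_refl[OF po] by blast+
  have "\<forall>c\<in>C. snd L a c" "\<forall>c\<in>C. snd L c b" unfolding ab(4) interval_def by blast+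
  thus "card (minset L C) = 1 \<and> card (maxset L C) = 1"
    using least_card_min greatest_card_max aC by blast
next
  assume "card (minset L C) = 1 \<and> card (maxset L C) = 1"
  then obtain a b where a: "a \<in> C" "\<forall>c\<in>C. snd L a c" and b: "b \<in> C" "\<forall>c\<in>C. snd L c b"
    using min_all max_all by blast
  have "C = interval L a b"
  proof
    show "C \<subseteq> interval L a b" unfolding interval_def using a b C_sub by blast
    show "interval L a b \<subseteq> C"
    proof
      fix z assume "z \<in> interval L a b"
      thus "z \<in> C" unfolding interval_def using cvx[OF a(1) b(1)] by blast
    qed
  qed
  thus "is_interval L C" unfolding is_interval_def using a b C_sub by blast
qed

end

lemma po_E0: "po E0"
  unfolding po_def E0_def by simp

lemma len_E0: "len E0 = 0"
proof (rule len_eqI[OF po_E0])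
  fix S assume "is_chain E0 S"
  hence "S \<subseteq> {[]}" unfolding is_chain_def E0_def by simp
  thus "card S \<le> 0 + 1" using card_mono[of "{[]}" S] by simp
next
  show "is_chain E0 {[]}" unfolding is_chain_def E0_def by simp
  show "card {[]} = 0 + 1" by simp
qed

lemma JI_E0: "join_irreducibles E0 = {}" "meet_irreducibles E0 = {}"
  unfolding join_irreducibles_def meet_irreducibles_def covers_def E0_def by auto

lemma E_snoc: "E (Cs @ [c]) = dbl (E Cs) c" by (simp add: E_def)

lemma all_snoc: "(\<forall>i<length (xs @ [x]). Q (take i (xs @ [x])) ((xs @ [x]) ! i)) \<longleftrightarrow>
   (\<forall>i<length xs. Q (take i xs) (xs ! i)) \<and> Q xs x"
proof -
  have "(\<forall>i<length (xs @ [x]). Q (take i (xs @ [x])) ((xs @ [x]) ! i)) \<longleftrightarrow>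
     (\<forall>i<Suc (length xs). Q (take i (xs @ [x])) ((xs @ [x]) ! i))" by simp
  also have "\<dots> \<longleftrightarrow> (\<forall>i<length xs. Q (take i (xs @ [x])) ((xs @ [x]) ! i)) \<and> Q (take (length xs) (xs @ [x])) ((xs @ [x]) ! length xs)"
    using less_Suc_eq by auto
  also have "(\<forall>i<length xs. Q (take i (xs @ [x])) ((xs @ [x]) ! i)) \<longleftrightarrow> (\<forall>i<length xs. Q (take i xs) (xs ! i))"
    by (simp add: nth_append)
  finally show ?thesis by simp
qed


definition hyp :: "bool list set list \<Rightarrow> bool" where
  "hyp Cs \<longleftrightarrow> (\<forall>i<length Cs. Cs ! i \<noteq> {} \<and> convex (E (take i Cs)) (Cs ! i))"

lemma hyp_snoc: "hyp (Cs @ [c]) \<longleftrightarrow> hyp Cs \<and> c \<noteq> {} \<and> convex (E Cs) c"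
  unfolding hyp_def using all_snoc[where Q="\<lambda>p C. C \<noteq> {} \<and> convex (E p) C" and xs=Cs and x=c] by simp

lemma main:
  "hyp Cs \<Longrightarrow> po (E Cs) \<and> len (E Cs) \<le> length Cs \<and> length Cs \<le> card (join_irreducibles (E Cs))
     \<and> length Cs \<le> card (meet_irreducibles (E Cs))
     \<and> (len (E Cs) = card (join_irreducibles (E Cs)) \<longleftrightarrow>
          (\<forall>i<length Cs. card (minset (E (take i Cs)) (Cs ! i)) = 1 \<and> Cs ! i \<inter> spine (E (take i Cs)) \<noteq> {}))
     \<and> (len (E Cs) = card (meet_irreducibles (E Cs)) \<longleftrightarrow>
          (\<forall>i<length Cs. card (maxset (E (take i Cs)) (Cs ! i)) = 1 \<and> Cs ! i \<inter> spine (E (take i Cs)) \<noteq> {}))"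
proof (induction Cs rule: rev_induct)
  case Nil
  have "E [] = E0" by (simp add: E_def)
  thus ?case using po_E0 len_E0 JI_E0 by simp
next
  case (snoc c Cs)
  have h: "hyp Cs" "c \<noteq> {}" "convex (E Cs) c" using snoc.prems hyp_snoc by blast+
  note IH = snoc.IH[OF h(1)]
  interpret d: dctx "E Cs" c using IH h by (unfold_locales) blast+
  let ?n = "length Cs"
  let ?s = "if c \<inter> spine (E Cs) \<noteq> {} then 1 else 0 :: nat"
  have eq: "E (Cs @ [c]) = dbl (E Cs) c" by (rule E_snoc)
  have lenE: "len (E (Cs @ [c])) = len (E Cs) + ?s" unfolding eq using d.len_dbl .
  have JE: "card (join_irreducibles (E (Cs @ [c]))) = card (join_irreducibles (E Cs)) + card (minset (E Cs) c)"
    unfolding eq using d.card_JI .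
  have ME: "card (meet_irreducibles (E (Cs @ [c]))) = card (meet_irreducibles (E Cs)) + card (maxset (E Cs) c)"
    unfolding eq using d.card_MI .
  have m1: "1 \<le> card (minset (E Cs) c)" "1 \<le> card (maxset (E Cs) c)"
    using d.card_min_ge d.card_max_ge by blast+
  have s1: "?s \<le> 1" by simp
  have A1: "(len (E (Cs @ [c])) = card (join_irreducibles (E (Cs @ [c])))) \<longleftrightarrow>
      (len (E Cs) = card (join_irreducibles (E Cs))) \<and> card (minset (E Cs) c) = 1 \<and> c \<inter> spine (E Cs) \<noteq> {}"
    unfolding lenE JE using IH m1 s1 by (cases "c \<inter> spine (E Cs) = {}") auto
  have A2: "(len (E (Cs @ [c])) = card (meet_irreducibles (E (Cs @ [c])))) \<longleftrightarrow>
      (len (E Cs) = card (meet_irreducibles (E Cs))) \<and> card (maxset (E Cs) c) = 1 \<and> c \<inter> spine (E Cs) \<noteq> {}"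
    unfolding lenE ME using IH m1 s1 by (cases "c \<inter> spine (E Cs) = {}") auto
  have B1: "(\<forall>i<length (Cs @ [c]). card (minset (E (take i (Cs @ [c]))) ((Cs @ [c]) ! i)) = 1 \<and> (Cs @ [c]) ! i \<inter> spine (E (take i (Cs @ [c]))) \<noteq> {})
     \<longleftrightarrow> (\<forall>i<length Cs. card (minset (E (take i Cs)) (Cs ! i)) = 1 \<and> Cs ! i \<inter> spine (E (take i Cs)) \<noteq> {})
       \<and> card (minset (E Cs) c) = 1 \<and> c \<inter> spine (E Cs) \<noteq> {}"
    using all_snoc[where Q="\<lambda>p C. card (minset (E p) C) = 1 \<and> C \<inter> spine (E p) \<noteq> {}" and xs=Cs and x=c] by simp
  have B2: "(\<forall>i<length (Cs @ [c]). card (maxset (E (take i (Cs @ [c]))) ((Cs @ [c]) ! i)) = 1 \<and> (Cs @ [c]) ! i \<inter> spine (E (take i (Cs @ [c]))) \<noteq> {})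
     \<longleftrightarrow> (\<forall>i<length Cs. card (maxset (E (take i Cs)) (Cs ! i)) = 1 \<and> Cs ! i \<inter> spine (E (take i Cs)) \<noteq> {})
       \<and> card (maxset (E Cs) c) = 1 \<and> c \<inter> spine (E Cs) \<noteq> {}"
    using all_snoc[where Q="\<lambda>p C. card (maxset (E p) C) = 1 \<and> C \<inter> spine (E p) \<noteq> {}" and xs=Cs and x=c] by simp
  have P: "po (E (Cs @ [c]))" unfolding eq using d.po_dbl .
  have L1: "len (E (Cs @ [c])) \<le> length (Cs @ [c])" using lenE IH s1 by simp
  have L2: "length (Cs @ [c]) \<le> card (join_irreducibles (E (Cs @ [c])))" using JE IH m1 by simp
  have L3: "length (Cs @ [c]) \<le> card (meet_irreducibles (E (Cs @ [c])))" using ME IH m1 by simp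
  show ?case using P L1 L2 L3 A1 A2 B1 B2 IH by blast
qed

lemma hyp_take: "hyp Cs \<Longrightarrow> i \<le> length Cs \<Longrightarrow> hyp (take i Cs)"
  unfolding hyp_def by (auto simp: min_def)

lemma dctx_i: assumes "hyp Cs" "i < length Cs" shows "dctx (E (take i Cs)) (Cs ! i)"
proof -
  have "hyp (take i Cs)" using hyp_take assms by simp
  hence "po (E (take i Cs))" using main by blast
  thus ?thesis using assms unfolding hyp_def by (unfold_locales) blast+
qed

theorem proposition3p11:
  fixes Cs :: "bool list set list"
  assumes "\<forall>i<length Cs. Cs ! i \<noteq> {} \<and> convex (E (take i Cs)) (Cs ! i)"
  shows "(join_extremal (E Cs) \<longleftrightarrow>
            (\<forall>i<length Cs. lower_pseudo_interval (E (take i Cs)) (Cs ! i) \<and>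
                            Cs ! i \<inter> spine (E (take i Cs)) \<noteq> {}))
       \<and> (meet_extremal (E Cs) \<longleftrightarrow>
            (\<forall>i<length Cs. upper_pseudo_interval (E (take i Cs)) (Cs ! i) \<and>
                            Cs ! i \<inter> spine (E (take i Cs)) \<noteq> {}))
       \<and> (extremal (E Cs) \<longleftrightarrow>
            (\<forall>i<length Cs. is_interval (E (take i Cs)) (Cs ! i) \<and>
                            Cs ! i \<inter> spine (E (take i Cs)) \<noteq> {}))"
proof -
  have H: "hyp Cs" using assms unfolding hyp_def .
  note M = main[OF H]
  have lp: "\<And>i. i < length Cs \<Longrightarrow> lower_pseudo_interval (E (take i Cs)) (Cs ! i) \<longleftrightarrow> card (minset (E (take i Cs)) (Cs ! i)) = 1"
    using dctx.lpi[OF dctx_i[OF H]] by blast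
  have up: "\<And>i. i < length Cs \<Longrightarrow> upper_pseudo_interval (E (take i Cs)) (Cs ! i) \<longleftrightarrow> card (maxset (E (take i Cs)) (Cs ! i)) = 1"
    using dctx.upi[OF dctx_i[OF H]] by blast
  have iv: "\<And>i. i < length Cs \<Longrightarrow> is_interval (E (take i Cs)) (Cs ! i) \<longleftrightarrow>
      card (minset (E (take i Cs)) (Cs ! i)) = 1 \<and> card (maxset (E (take i Cs)) (Cs ! i)) = 1"
    using dctx.ivl[OF dctx_i[OF H]] by blast
  have J: "join_extremal (E Cs) \<longleftrightarrow>
            (\<forall>i<length Cs. lower_pseudo_interval (E (take i Cs)) (Cs ! i) \<and>
                            Cs ! i \<inter> spine (E (take i Cs)) \<noteq> {})"
    unfolding join_extremal_def using M lp by auto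
  have Me: "meet_extremal (E Cs) \<longleftrightarrow>
            (\<forall>i<length Cs. upper_pseudo_interval (E (take i Cs)) (Cs ! i) \<and>
                            Cs ! i \<inter> spine (E (take i Cs)) \<noteq> {})"
    unfolding meet_extremal_def using M up by auto
  have X: "extremal (E Cs) \<longleftrightarrow>
            (\<forall>i<length Cs. is_interval (E (take i Cs)) (Cs ! i) \<and>
                            Cs ! i \<inter> spine (E (take i Cs)) \<noteq> {})"
    unfolding extremal_def join_extremal_def meet_extremal_def using M iv by auto
  show ?thesis using J Me X by blast
qed

end
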